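(* Let $G$ be a finite group and $H\leqslant G$ a subgroup. If $g_2(H)\geq N$, then $g_2(G)\geq N$.
   Context: For a finite group $G$ and positive integer $N$, $r_N(G)$ is the minimum number of generators among subgroups of $G$ of index at most $N$, and $g_k(G)=\max\{N : |G|\geq N \text{ and } r_N(G)\geq k\}$. *)

theory Defs
  imports "HOL-Algebra.Algebra"
begin

definition gen_rank :: "('a, 'b) monoid_scheme \<Rightarrow> 'a set \<Rightarrow> nat" where
  "gen_rank G K = Inf {card S | S. S \<subseteq> K \<and> finite S \<and> generate G S = K}"

definition rN :: "('a, 'b) monoid_scheme \<Rightarrow> nat \<Rightarrow> nat" where
  "rN G N = Inf {gen_rank G K | K. subgroup K G \<and> card (rcosets\<^bsub>G\<^esub> K) \<le> N}"

text \<open>g_k(G) = max{N : 1 <= N <= |G|, r_N(G) >= k}; 0 if no such N.\<close>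
definition gk :: "('a, 'b) monoid_scheme \<Rightarrow> nat \<Rightarrow> nat" where
  "gk G k = Sup {N. 1 \<le> N \<and> N \<le> order G \<and> k \<le> rN G N}"

end

theory Submission
  imports Defs
begin

lemma (in group) subgroup_nat_pow_closed':
  assumes "subgroup H G" "h \<in> H" shows "h [^] (k::nat) \<in> H"
  using subgroup_int_pow_closed[OF assms, of "int k"] assms
  by (simp add: int_pow_int)

lemma (in group) cyclic_inter:
  assumes fin: "finite (carrier G)" and g: "g \<in> carrier G" and H: "subgroup H G"
  shows "\<exists>x\<in>H. generate G {g} \<inter> H = generate G {x}"
proof -
  have o: "0 < ord g" using ord_ge_1[OF fin g] by simp
  have "g [^] ord g \<in> H" using pow_ord_eq_1[OF g] subgroup.one_closed[OF H] by simp
  hence ex: "\<exists>d::nat. 0 < d \<and> g [^] d \<in> H" using o by blast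
  define d where "d = (LEAST d::nat. 0 < d \<and> g [^] d \<in> H)"
  have d: "0 < d" "g [^] d \<in> H" using LeastI_ex[OF ex] unfolding d_def by auto
  have dmin: "\<And>r::nat. 0 < r \<Longrightarrow> r < d \<Longrightarrow> g [^] r \<notin> H"
    using not_less_Least unfolding d_def by blast
  let ?x = "g [^] d"
  have xc: "?x \<in> carrier G" using g by simp
  have "generate G {g} \<inter> H = generate G {?x}"
  proof
    show "generate G {g} \<inter> H \<subseteq> generate G {?x}"
    proof
      fix y assume y: "y \<in> generate G {g} \<inter> H"
      then obtain n :: nat where n: "y = g [^] n"
        using generate_pow_on_finite_carrier[OF fin g] by blast
      define q r where "q = n div d" and "r = n mod d"
      have nqr: "n = d * q + r" unfolding q_def r_def by simp
      have "y = ?x [^] q \<otimes> g [^] r" using n nqr g by (simp add: nat_pow_mult nat_pow_pow)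
      hence "g [^] r = inv (?x [^] q) \<otimes> y"
        using inv_solve_left[of "g [^] r" "?x [^] q" y] g n by simp
      moreover have "inv (?x [^] q) \<in> H"
        using subgroup_nat_pow_closed'[OF H d(2)] subgroup.m_inv_closed[OF H] by blast
      ultimately have "g [^] r \<in> H" using y subgroup.m_closed[OF H] by auto
      moreover have "r < d" unfolding r_def using d(1) by simp
      ultimately have "r = 0" using dmin by blast
      hence "y = ?x [^] q" using \<open>y = ?x [^] q \<otimes> g [^] r\<close> xc by simp
      thus "y \<in> generate G {?x}"
        using generate_pow_on_finite_carrier[OF fin xc] by blast
    qed
  next
    show "generate G {?x} \<subseteq> generate G {g} \<inter> H"
    proof
      fix y assume "y \<in> generate G {?x}"
      then obtain k :: nat where k: "y = ?x [^] k"
        using generate_pow_on_finite_carrier[OF fin xc] by blast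
      have "y = g [^] (d * k)" using k g by (simp add: nat_pow_pow)
      hence "y \<in> generate G {g}" using generate_pow_on_finite_carrier[OF fin g] by blast
      moreover have "y \<in> H" using k subgroup_nat_pow_closed'[OF H d(2)] by simp
      ultimately show "y \<in> generate G {g} \<inter> H" by blast
    qed
  qed
  thus ?thesis using d(2) by blast
qed

lemma (in group) index_inter_le:
  assumes fin: "finite (carrier G)" and K: "subgroup K G" and H: "subgroup H G"
  shows "card (rcosets\<^bsub>G\<lparr>carrier := H\<rparr>\<^esub> (K \<inter> H)) \<le> card (rcosets K)"
proof -
  have rc: "\<And>A h. A #>\<^bsub>G\<lparr>carrier := H\<rparr>\<^esub> h = A #> h" by (simp add: r_coset_def)
  have e1: "rcosets\<^bsub>G\<lparr>carrier := H\<rparr>\<^esub> (K \<inter> H) = (\<lambda>h. (K \<inter> H) #> h) ` H"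
    unfolding RCOSETS_def rc by auto
  have mem: "\<And>A y h. y \<in> A #> h \<longleftrightarrow> (\<exists>k\<in>A. y = k \<otimes> h)"
    unfolding r_coset_def by blast
  have e2: "(K #> h) \<inter> H = (K \<inter> H) #> h" if h: "h \<in> H" for h
  proof (rule Set.set_eqI)
    fix y
    have hc: "h \<in> carrier G" by (rule subgroup.mem_carrier[OF H h])
    have "(\<exists>k\<in>K. y = k \<otimes> h) \<and> y \<in> H \<longleftrightarrow> (\<exists>k\<in>K \<inter> H. y = k \<otimes> h)"
    proof
      assume "(\<exists>k\<in>K. y = k \<otimes> h) \<and> y \<in> H"
      then obtain k where k: "k \<in> K" "y = k \<otimes> h" "y \<in> H" by blast
      have kc: "k \<in> carrier G" by (rule subgroup.mem_carrier[OF K k(1)])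
      have "k = y \<otimes> inv h" using k(2) kc hc by (simp add: m_assoc)
      moreover have "y \<otimes> inv h \<in> H"
        using k(3) h subgroup.m_closed[OF H] subgroup.m_inv_closed[OF H] by blast
      ultimately have kH: "k \<in> H" by (simp only:)
      show "\<exists>k\<in>K \<inter> H. y = k \<otimes> h" using k(1,2) kH by blast
    next
      assume "\<exists>k\<in>K \<inter> H. y = k \<otimes> h"
      then obtain k where k: "k \<in> K" "k \<in> H" "y = k \<otimes> h" by blast
      thus "(\<exists>k\<in>K. y = k \<otimes> h) \<and> y \<in> H" using h subgroup.m_closed[OF H] by blast
    qed
    thus "y \<in> (K #> h) \<inter> H \<longleftrightarrow> y \<in> (K \<inter> H) #> h" unfolding Int_iff mem .
  qed
  have eq: "rcosets\<^bsub>G\<lparr>carrier := H\<rparr>\<^esub> (K \<inter> H) = (\<lambda>D. D \<inter> H) ` ((\<lambda>h. K #> h) ` H)"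
    unfolding e1 image_image by (rule image_cong) (simp_all add: e2)
  have sub: "(\<lambda>h. K #> h) ` H \<subseteq> rcosets K"
    using subgroup.subset[OF H] unfolding RCOSETS_def by auto
  have finR: "finite (rcosets K)"
    by (rule finite_subset[OF rcosets_subset_PowG[OF K]]) (simp add: fin)
  have fin2: "finite ((\<lambda>h. K #> h) ` H)" using finite_subset[OF sub finR] .
  have c2: "card ((\<lambda>h. K #> h) ` H) \<le> card (rcosets K)" using card_mono[OF finR sub] .
  have "card ((\<lambda>D. D \<inter> H) ` ((\<lambda>h. K #> h) ` H)) \<le> card ((\<lambda>h. K #> h) ` H)"
    using fin2 by (rule card_image_le)
  thus ?thesis using c2 eq by simp
qed

lemma (in group) key:
  assumes fin: "finite (carrier G)" and H: "subgroup H G" and M: "1 \<le> M"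
    and r2: "2 \<le> rN (G\<lparr>carrier := H\<rparr>) M"
  shows "2 \<le> rN G M"
proof (rule ccontr)
  assume "\<not> 2 \<le> rN G M"
  hence lt: "rN G M < 2" by simp
  let ?SG = "{gen_rank G K | K. subgroup K G \<and> card (rcosets K) \<le> M}"
  have "card (rcosets (carrier G)) * card (carrier G) = order G"
    using lagrange_finite[OF fin subgroup_self] .
  moreover have "0 < order G" using fin unfolding order_def
    using one_closed by (auto simp add: card_gt_0_iff)
  ultimately have "card (rcosets (carrier G)) = 1" unfolding order_def by simp
  hence "gen_rank G (carrier G) \<in> ?SG" using M subgroup_self by auto
  hence "rN G M \<in> ?SG" unfolding rN_def by (intro Inf_nat_def1) blast
  then obtain K where K: "subgroup K G" "card (rcosets K) \<le> M" "gen_rank G K < 2"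
    using lt by auto
  let ?TK = "{card S | S. S \<subseteq> K \<and> finite S \<and> generate G S = K}"
  have Kc: "K \<subseteq> carrier G" using subgroup.subset[OF K(1)] .
  have "generate G K = K" using generateI[OF K(1) subset_refl] by simp
  hence "card K \<in> ?TK" using finite_subset[OF Kc fin] by auto
  hence "gen_rank G K \<in> ?TK" unfolding gen_rank_def by (intro Inf_nat_def1) blast
  then obtain S where S: "S \<subseteq> K" "finite S" "generate G S = K" "card S < 2"
    using K(3) by auto
  obtain g where g: "g \<in> carrier G" "K = generate G {g}"
  proof (cases "card S = 0")
    case True
    hence "S = {}" using S(2) by simp
    hence "K = generate G {\<one>}" using S(3) generate_empty generate_one by simp
    thus ?thesis using that one_closed by blast
  next
    case False
    hence "card S = 1" using S(4) by simp
    then obtain x where "S = {x}" using card_1_singletonE by blast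
    thus ?thesis using that S Kc by auto
  qed
  obtain x where x: "x \<in> H" "K \<inter> H = generate G {x}"
    using cyclic_inter[OF fin g(1) H] g(2) by blast
  let ?H = "G\<lparr>carrier := H\<rparr>"
  have xc: "x \<in> carrier G" using subgroup.mem_carrier[OF H x(1)] .
  have sub: "subgroup (K \<inter> H) ?H"
    using subgroup_incl[OF subgroups_Inter_pair[OF K(1) H] H] by simp
  have "generate ?H {x} = generate G {x}"
    using generate_consistent[of "{x}" H] x(1) H by simp
  hence P: "{x} \<subseteq> K \<inter> H \<and> finite {x} \<and> generate ?H {x} = K \<inter> H"
    using x generate.incl[of x "{x}" G] by simp
  have "card {x} \<in> {card S | S. S \<subseteq> K \<inter> H \<and> finite S \<and> generate ?H S = K \<inter> H}"
    using P by blast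
  hence "gen_rank ?H (K \<inter> H) \<le> card {x}" unfolding gen_rank_def Inf_nat_def
    by (rule Least_le)
  hence gr: "gen_rank ?H (K \<inter> H) \<le> 1" by simp
  have "card (rcosets\<^bsub>?H\<^esub> (K \<inter> H)) \<le> M"
    using index_inter_le[OF fin K(1) H] K(2) by simp
  hence "gen_rank ?H (K \<inter> H) \<in> {gen_rank ?H L | L. subgroup L ?H \<and> card (rcosets\<^bsub>?H\<^esub> L) \<le> M}"
    using sub by auto
  hence "rN ?H M \<le> gen_rank ?H (K \<inter> H)" unfolding rN_def
    by (simp add: Inf_nat_def Least_le)
  thus False using gr r2 by simp
qed

theorem mainTheorem15:
  fixes G :: "('a, 'b) monoid_scheme" and H :: "'a set" and N :: nat
  assumes "group G" and "finite (carrier G)" and "subgroup H G"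
    and "gk (G\<lparr>carrier := H\<rparr>) 2 \<ge> N"
  shows "gk G 2 \<ge> N"
proof (cases "N = 0")
  case True thus ?thesis by simp
next
  case False
  let ?H = "G\<lparr>carrier := H\<rparr>"
  let ?A = "{N. 1 \<le> N \<and> N \<le> order ?H \<and> 2 \<le> rN ?H N}"
  let ?B = "{N. 1 \<le> N \<and> N \<le> order G \<and> 2 \<le> rN G N}"
  have finA: "finite ?A" by (rule finite_subset[of _ "{..order ?H}"]) auto
  have ne: "?A \<noteq> {}"
  proof
    assume "?A = {}"
    hence "gk ?H 2 = 0" unfolding gk_def by (simp only: Sup_nat_empty)
    thus False using False assms(4) by simp
  qed
  have "Sup ?A = Max ?A" using ne by (simp only: Sup_nat_def if_False)
  moreover have "Max ?A \<in> ?A" by (rule Max_in[OF finA ne])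
  ultimately have "Sup ?A \<in> ?A" by (simp only:)
  then obtain M where M: "M \<in> ?A" "N \<le> M" using assms(4) unfolding gk_def by auto
  have "order ?H \<le> order G" unfolding order_def
    using card_mono[OF assms(2) subgroup.subset[OF assms(3)]] by simp
  hence "M \<in> ?B" using M(1) group.key[OF assms(1) assms(2) assms(3)] by auto
  moreover have "finite ?B" by (rule finite_subset[of _ "{..order G}"]) auto
  ultimately have "M \<le> Sup ?B" by (intro cSup_upper) (simp_all add: bdd_above_nat)
  thus ?thesis using M(2) unfolding gk_def by simp
qed

end
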